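(* Let $N=\{1,\dots,n\}$, $\eta>0$, integers $B\ge1$, $Q\ge1$. Let $(A(k))_{k\ge0}$ be $n\times n$ matrices, let $x(0)\in\mathbb{R}^n$ have every component a multiple of $1/Q$, not all components equal, and define componentwise $x_i(k+1)=\lfloor\sum_{j=1}^n a_{ij}(k)x_j(k)\rfloor$, where $\lfloor\cdot\rfloor$ denotes rounding down to the nearest multiple of $1/Q$. Assume: (i) for every $k$, $A(k)$ is doubly stochastic with positive diagonal entries and every positive entry of $A(k)$ is at least $\eta$; (ii) for every integer $k\ge 0$, every permutation $\sigma$ of $N$ with $x_{\sigma(1)}(kB)\ge\cdots\ge x_{\sigma(n)}(kB)$, and every $d\in\{1,\dots,n-1\}$, either $x_{\sigma(d)}(kB)=x_{\sigma(d+1)}(kB)$, or there exist $t\in\{kB,\dots,(k+1)B-1\}$, $i\in\{\sigma(1),\dots,\sigma(d)\}$, $j\in\{\sigma(d+1),\dots,\sigma(n)\}$ such that $(i,j)$ or $(j,i)$ belongs to $\mathcal{E}(A(t))$. Then all $x_i(k)$ converge to a common limit $x_f$, and there is an absolute constant $c$ such that \[\Big|x_f-\frac1n\sum_{i=1}^n x_i(0)\Big|\le \frac{c}{Q}\,\frac{n^2}{\eta}\,B\log\big(Qn(U-L)\big),\] where $U=\max_i x_i(0)$ and $L=\min_i x_i(0)$.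
   Context: A matrix is doubly stochastic if it is nonnegative with all row and column sums equal to $1$. For a matrix $A=[a_{ij}]$, $\mathcal{E}(A)$ is the set of directed edges $(j,i)$ (including self-edges) with $a_{ij}>0$. *)

theory Defs
  imports Complex_Main "HOL-Combinatorics.Permutations"
begin

text \<open>Vectors and n-by-n matrices are indexed by N = {1..n}. A matrix sequence is
  A :: nat => nat => nat => real, with A k i j the (i,j) entry of A(k).\<close>

definition doubly_stochastic :: "nat \<Rightarrow> (nat \<Rightarrow> nat \<Rightarrow> real) \<Rightarrow> bool" where
  "doubly_stochastic n M \<longleftrightarrow>
     (\<forall>i\<in>{1..n}. \<forall>j\<in>{1..n}. M i j \<ge> 0) \<and>
     (\<forall>i\<in>{1..n}. (\<Sum>j=1..n. M i j) = 1) \<and>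
     (\<forall>j\<in>{1..n}. (\<Sum>i=1..n. M i j) = 1)"

definition edges :: "nat \<Rightarrow> (nat \<Rightarrow> nat \<Rightarrow> real) \<Rightarrow> (nat \<times> nat) set" where
  "edges n M = {(j, i). i \<in> {1..n} \<and> j \<in> {1..n} \<and> M i j > 0}"

definition floorQ :: "nat \<Rightarrow> real \<Rightarrow> real" where
  "floorQ Q y = real_of_int \<lfloor>real Q * y\<rfloor> / real Q"

primrec traj :: "nat \<Rightarrow> nat \<Rightarrow> (nat \<Rightarrow> nat \<Rightarrow> nat \<Rightarrow> real) \<Rightarrow> (nat \<Rightarrow> real) \<Rightarrow> nat \<Rightarrow> nat \<Rightarrow> real" where
  "traj n Q A x0 0 = x0"
| "traj n Q A x0 (Suc k) = (\<lambda>i. floorQ Q (\<Sum>j=1..n. A k i j * traj n Q A x0 k j))"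

end

theory Submission
  imports Defs
begin



definition gridQ :: "nat \<Rightarrow> real \<Rightarrow> bool" where
  "gridQ Q v \<longleftrightarrow> (\<exists>m::int. v = of_int m / real Q)"

lemma floorQ_le: "Q \<ge> 1 \<Longrightarrow> floorQ Q y \<le> y"
  unfolding floorQ_def by (simp add: divide_le_eq mult.commute)

lemma floorQ_gt: "Q \<ge> 1 \<Longrightarrow> y - 1 / real Q < floorQ Q y"
proof -
  assume Q: "Q \<ge> 1"
  have "real Q * y - 1 < of_int \<lfloor>real Q * y\<rfloor>" by linarith
  hence "(real Q * y - 1) / Q < of_int \<lfloor>real Q * y\<rfloor> / Q" using Q by (simp add: divide_strict_right_mono)
  thus ?thesis using Q unfolding floorQ_def by (simp add: diff_divide_distrib)
qed

lemma floorQ_grid: "gridQ Q (floorQ Q y)"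
  unfolding floorQ_def gridQ_def by blast

lemma floorQ_ge: "Q \<ge> 1 \<Longrightarrow> gridQ Q v \<Longrightarrow> v \<le> y \<Longrightarrow> v \<le> floorQ Q y"
proof -
  assume Q: "Q \<ge> 1" and g: "gridQ Q v" and le: "v \<le> y"
  then obtain m::int where m: "v = m / Q" unfolding gridQ_def by blast
  have "of_int m \<le> real Q * y" using le m Q by (simp add: divide_le_eq mult.commute)
  hence "m \<le> \<lfloor>real Q * y\<rfloor>" by linarith
  hence "real_of_int m \<le> of_int \<lfloor>real Q * y\<rfloor>" by simp
  thus ?thesis using m Q unfolding floorQ_def by (simp add: divide_right_mono)
qed

lemma floorQ_id: "Q \<ge> 1 \<Longrightarrow> gridQ Q v \<Longrightarrow> floorQ Q v = v"
  using floorQ_le floorQ_ge by (metis order_antisym order_refl)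

lemma grid_diff: "Q \<ge> 1 \<Longrightarrow> gridQ Q u \<Longrightarrow> gridQ Q v \<Longrightarrow> v < u \<Longrightarrow> 1 / real Q \<le> u - v"
proof -
  assume Q: "Q \<ge> 1" and gu: "gridQ Q u" and gv: "gridQ Q v" and lt: "v < u"
  obtain a::int where a: "u = a / Q" using gu unfolding gridQ_def by blast
  obtain b::int where b: "v = b / Q" using gv unfolding gridQ_def by blast
  have "real_of_int b < of_int a" using lt a b Q by (simp add: divide_strict_right_mono_neg divide_less_cancel)
  hence "b + 1 \<le> a" by simp
  hence "real_of_int b + 1 \<le> of_int a" by linarith
  hence "(real_of_int b + 1) / Q \<le> of_int a / Q" using Q by (simp add: divide_right_mono)
  thus ?thesis using a b by (simp add: add_divide_distrib)
qed

lemma grid_diff_pos: "Q \<ge> 1 \<Longrightarrow> gridQ Q (real Q * 0 + u) \<Longrightarrow> True" by simp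

lemma sort_perm:
  fixes y :: "nat \<Rightarrow> real"
  shows "\<exists>\<sigma>. \<sigma> permutes {1..n} \<and> (\<forall>p\<in>{1..<n}. y (\<sigma> (Suc p)) \<le> y (\<sigma> p))"
proof -
  define xs where "xs = sort_key (\<lambda>i. - y i) [1..<n+1]"
  have d: "distinct xs" and s: "set xs = {1..n}" and l: "length xs = n"
    unfolding xs_def by (auto simp: length_sort)
  have so: "sorted (map (\<lambda>i. - y i) xs)" unfolding xs_def by simp
  define \<sigma> where "\<sigma> p = (if p \<in> {1..n} then xs ! (p - 1) else p)" for p
  have b1: "bij_betw ((!) xs) {..<n} {1..n}" using bij_betw_nth[OF d] l s by simp
  have b2: "bij_betw (\<lambda>p. p - 1) {1..n} {..<n}"
    by (rule bij_betw_byWitness[where f'="\<lambda>p. p + 1"]) auto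
  have "bij_betw ((!) xs \<circ> (\<lambda>p. p - 1)) {1..n} {1..n}" using bij_betw_trans[OF b2 b1] .
  hence "bij_betw \<sigma> {1..n} {1..n}"
    by (rule bij_betw_cong[THEN iffD1, rotated]) (simp add: \<sigma>_def)
  hence perm: "\<sigma> permutes {1..n}" by (rule bij_imp_permutes) (auto simp add: \<sigma>_def)
  have "y (\<sigma> (Suc p)) \<le> y (\<sigma> p)" if p: "p \<in> {1..<n}" for p
  proof -
    have "map (\<lambda>i. - y i) xs ! (p - 1) \<le> map (\<lambda>i. - y i) xs ! p"
      using sorted_nth_mono[OF so, of "p - 1" p] p l by auto
    moreover have "p - 1 < length xs" using p l by auto
    ultimately have "- y (xs ! (p - 1)) \<le> - y (xs ! p)" using p l by simp
    thus ?thesis using p l by (simp add: \<sigma>_def)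
  qed
  thus ?thesis using perm by blast
qed




lemma row_id:
  fixes a z :: "nat \<Rightarrow> real"
  assumes "finite S" "(\<Sum>j\<in>S. a j) = 1"
  shows "(\<Sum>j\<in>S. a j * z j)^2 = (\<Sum>j\<in>S. a j * (z j)^2) - (1/2) * (\<Sum>j\<in>S. \<Sum>l\<in>S. a j * a l * (z j - z l)^2)"
proof -
  have p1: "(\<Sum>j\<in>S. \<Sum>l\<in>S. a j * a l * (z j)^2) = (\<Sum>j\<in>S. a j * (z j)^2)"
  proof -
    have e: "(\<Sum>l\<in>S. a j * a l * (z j)^2) = a j * (z j)^2 * (\<Sum>l\<in>S. a l)" for j
      by (subst sum_distrib_left) (simp add: mult_ac)
    have "(\<Sum>j\<in>S. \<Sum>l\<in>S. a j * a l * (z j)^2) = (\<Sum>j\<in>S. a j * (z j)^2 * (\<Sum>l\<in>S. a l))"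
      by (simp only: e)
    thus ?thesis using assms by simp
  qed
  have p2: "(\<Sum>j\<in>S. \<Sum>l\<in>S. a j * a l * (z l)^2) = (\<Sum>l\<in>S. a l * (z l)^2)"
  proof -
    have "(\<Sum>j\<in>S. \<Sum>l\<in>S. a j * a l * (z l)^2) = (\<Sum>j\<in>S. a j * (\<Sum>l\<in>S. a l * (z l)^2))"
      by (simp add: sum_distrib_left algebra_simps)
    also have "\<dots> = (\<Sum>j\<in>S. a j) * (\<Sum>l\<in>S. a l * (z l)^2)" by (simp add: sum_distrib_right)
    finally show ?thesis using assms by simp
  qed
  have p3: "(\<Sum>j\<in>S. \<Sum>l\<in>S. a j * a l * (z j * z l)) = (\<Sum>j\<in>S. a j * z j)^2"
    by (simp add: power2_eq_square sum_product algebra_simps)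
  have "(\<Sum>j\<in>S. \<Sum>l\<in>S. a j * a l * (z j - z l)^2)
      = (\<Sum>j\<in>S. \<Sum>l\<in>S. a j * a l * (z j)^2 + a j * a l * (z l)^2 - 2 * (a j * a l * (z j * z l)))"
    by (intro sum.cong refl) (simp add: power2_diff algebra_simps)
  also have "\<dots> = (\<Sum>j\<in>S. \<Sum>l\<in>S. a j * a l * (z j)^2) + (\<Sum>j\<in>S. \<Sum>l\<in>S. a j * a l * (z l)^2)
        - 2 * (\<Sum>j\<in>S. \<Sum>l\<in>S. a j * a l * (z j * z l))"
    by (simp add: sum.distrib sum_subtractf sum_distrib_left)
  finally show ?thesis using p1 p2 p3 by (simp add: field_simps)
qed

lemma sumsq_le_sq:
  fixes g :: "nat \<Rightarrow> real"
  assumes "finite D" "\<And>d. d \<in> D \<Longrightarrow> g d \<ge> 0"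
  shows "(\<Sum>d\<in>D. (g d)^2) \<le> (\<Sum>d\<in>D. g d)^2"
proof -
  have "(\<Sum>d\<in>D. (g d)^2) \<le> (\<Sum>d\<in>D. g d * (\<Sum>e\<in>D. g e))"
  proof (rule sum_mono)
    fix d assume d: "d \<in> D"
    have "g d \<le> (\<Sum>e\<in>D. g e)" using member_le_sum[OF d] assms by blast
    thus "(g d)^2 \<le> g d * (\<Sum>e\<in>D. g e)" using assms(2)[OF d] by (simp add: power2_eq_square mult_left_mono)
  qed
  also have "\<dots> = (\<Sum>d\<in>D. g d)^2" by (simp add: power2_eq_square sum_distrib_right)
  finally show ?thesis .
qed

lemma cauchy_schwarz_sum:
  fixes g :: "nat \<Rightarrow> real"
  assumes "finite D"
  shows "(\<Sum>d\<in>D. g d)^2 \<le> real (card D) * (\<Sum>d\<in>D. (g d)^2)"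
proof -
  have "(\<Sum>d\<in>D. g d)^2 = (\<Sum>d\<in>D. \<Sum>e\<in>D. g d * g e)" by (simp add: power2_eq_square sum_product)
  also have "\<dots> \<le> (\<Sum>d\<in>D. \<Sum>e\<in>D. ((g d)^2 + (g e)^2) / 2)"
  proof (intro sum_mono)
    fix d e
    have "0 \<le> (g d - g e)^2" by simp
    thus "g d * g e \<le> ((g d)^2 + (g e)^2) / 2" by (simp add: power2_diff)
  qed
  also have "\<dots> = (\<Sum>d\<in>D. \<Sum>e\<in>D. (g d)^2 / 2) + (\<Sum>d\<in>D. \<Sum>e\<in>D. (g e)^2 / 2)"
    by (simp add: sum.distrib add_divide_distrib)
  also have "\<dots> = real (card D) * (\<Sum>d\<in>D. (g d)^2)"
    by (simp add: sum_divide_distrib[symmetric] sum.swap[of _ D D] sum_distrib_left[symmetric] mult.commute)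
  finally show ?thesis .
qed




locale qc =
  fixes n :: nat and \<eta> :: real and B Q :: nat and A :: "nat \<Rightarrow> nat \<Rightarrow> nat \<Rightarrow> real" and x0 :: "nat \<Rightarrow> real"
  assumes eta: "\<eta> > 0" and Bge: "B \<ge> 1" and Qge: "Q \<ge> 1"
  and grid0: "\<forall>i\<in>{1..n}. \<exists>m::int. x0 i = real_of_int m / real Q"
  and ds: "\<forall>k. doubly_stochastic n (A k) \<and> (\<forall>i\<in>{1..n}. A k i i > 0) \<and>
          (\<forall>i\<in>{1..n}. \<forall>j\<in>{1..n}. A k i j > 0 \<longrightarrow> A k i j \<ge> \<eta>)"
  and conn: "\<forall>k \<sigma> d. \<sigma> permutes {1..n} \<and>
          (\<forall>p\<in>{1..<n}. traj n Q A x0 (k*B) (\<sigma> p) \<ge> traj n Q A x0 (k*B) (\<sigma> (Suc p))) \<and>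
          d \<in> {1..<n} \<longrightarrow>
          traj n Q A x0 (k*B) (\<sigma> d) = traj n Q A x0 (k*B) (\<sigma> (Suc d)) \<or>
          (\<exists>t\<in>{k*B..<(Suc k)*B}. \<exists>i\<in>\<sigma> ` {1..d}. \<exists>j\<in>\<sigma> ` {Suc d..n}.
              (i, j) \<in> edges n (A t) \<or> (j, i) \<in> edges n (A t))"
begin

abbreviation "x \<equiv> traj n Q A x0"
abbreviation "N \<equiv> {1..n}"

lemma nonneg: "i \<in> N \<Longrightarrow> j \<in> N \<Longrightarrow> A k i j \<ge> 0"
  using ds unfolding doubly_stochastic_def by blast
lemma rowsum: "i \<in> N \<Longrightarrow> (\<Sum>j\<in>N. A k i j) = 1"
  using ds unfolding doubly_stochastic_def by blast
lemma colsum: "j \<in> N \<Longrightarrow> (\<Sum>i\<in>N. A k i j) = 1"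
  using ds unfolding doubly_stochastic_def by blast
lemma diagpos: "i \<in> N \<Longrightarrow> A k i i \<ge> \<eta>"
  using ds by blast
lemma lbnd: "i \<in> N \<Longrightarrow> j \<in> N \<Longrightarrow> A k i j > 0 \<Longrightarrow> A k i j \<ge> \<eta>"
  using ds by blast

lemma grid_x: "i \<in> N \<Longrightarrow> gridQ Q (x t i)"
proof (cases t)
  case 0
  assume "i \<in> N" thus ?thesis using grid0 0 unfolding gridQ_def by auto
next
  case (Suc s) thus ?thesis by (simp add: floorQ_grid)
qed

lemma conv_ge:
  assumes i: "i \<in> N" and h: "\<And>j. j \<in> N \<Longrightarrow> A t i j \<noteq> 0 \<Longrightarrow> c \<le> f j"
  shows "c \<le> (\<Sum>j\<in>N. A t i j * f j)"
proof -
  have "c = (\<Sum>j\<in>N. A t i j * c)" using rowsum[OF i] by (simp add: sum_distrib_right[symmetric])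
  also have "\<dots> \<le> (\<Sum>j\<in>N. A t i j * f j)"
  proof (rule sum_mono)
    fix j assume j: "j \<in> N"
    show "A t i j * c \<le> A t i j * f j"
      using h[OF j] nonneg[OF i j] by (cases "A t i j = 0") (auto intro: mult_left_mono)
  qed
  finally show ?thesis .
qed

lemma conv_le:
  assumes i: "i \<in> N" and h: "\<And>j. j \<in> N \<Longrightarrow> A t i j \<noteq> 0 \<Longrightarrow> f j \<le> c"
  shows "(\<Sum>j\<in>N. A t i j * f j) \<le> c"
proof -
  have "(\<Sum>j\<in>N. A t i j * f j) \<le> (\<Sum>j\<in>N. A t i j * c)"
  proof (rule sum_mono)
    fix j assume j: "j \<in> N"
    show "A t i j * f j \<le> A t i j * c"
      using h[OF j] nonneg[OF i j] by (cases "A t i j = 0") (auto intro: mult_left_mono)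
  qed
  also have "\<dots> = c" using rowsum[OF i] by (simp add: sum_distrib_right[symmetric])
  finally show ?thesis .
qed

lemma lower_step:
  assumes g: "gridQ Q c" and h: "\<forall>j\<in>N. c \<le> x t j" and i: "i \<in> N"
  shows "c \<le> x (Suc t) i"
proof -
  have "c \<le> (\<Sum>j\<in>N. A t i j * x t j)" using h by (intro conv_ge[OF i]) auto
  thus ?thesis using floorQ_ge[OF Qge g] by simp
qed

lemma lower_mono:
  assumes g: "gridQ Q c" and h: "\<forall>j\<in>N. c \<le> x t j" and ts: "t \<le> s"
  shows "\<forall>i\<in>N. c \<le> x s i"
  using ts
proof (induction s rule: dec_induct)
  case base thus ?case using h by simp
next
  case (step s) thus ?case using lower_step[OF g] by blast
qed

lemma cons_step:
  assumes g: "gridQ Q v" and h: "\<forall>j\<in>N. x t j = v" and i: "i \<in> N"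
  shows "x (Suc t) i = v"
proof -
  have "(\<Sum>j\<in>N. A t i j * x t j) = (\<Sum>j\<in>N. A t i j * v)" using h by (intro sum.cong) auto
  also have "\<dots> = v" using rowsum[OF i] by (simp add: sum_distrib_right[symmetric])
  finally show ?thesis using floorQ_id[OF Qge g] by simp
qed

lemma cons_mono:
  assumes g: "gridQ Q v" and h: "\<forall>j\<in>N. x t j = v" and ts: "t \<le> s"
  shows "\<forall>i\<in>N. x s i = v"
  using ts
proof (induction s rule: dec_induct)
  case base thus ?case using h by simp
next
  case (step s) thus ?case using cons_step[OF g] by blast
qed

lemma sum_mix: "(\<Sum>i\<in>N. \<Sum>j\<in>N. A t i j * f j) = (\<Sum>j\<in>N. f j)"
proof -
  have "(\<Sum>i\<in>N. \<Sum>j\<in>N. A t i j * f j) = (\<Sum>j\<in>N. (\<Sum>i\<in>N. A t i j) * f j)"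
    by (subst sum.swap) (simp add: sum_distrib_right)
  also have "\<dots> = (\<Sum>j\<in>N. f j)" using colsum by (intro sum.cong) auto
  finally show ?thesis .
qed

lemma sum_step_le: "(\<Sum>i\<in>N. x (Suc t) i) \<le> (\<Sum>i\<in>N. x t i)"
proof -
  have "(\<Sum>i\<in>N. x (Suc t) i) \<le> (\<Sum>i\<in>N. \<Sum>j\<in>N. A t i j * x t j)"
    by (rule sum_mono) (simp add: floorQ_le[OF Qge])
  thus ?thesis using sum_mix by simp
qed

lemma sum_step_ge: "(\<Sum>i\<in>N. x t i) - real n / Q \<le> (\<Sum>i\<in>N. x (Suc t) i)"
proof -
  have "(\<Sum>i\<in>N. (\<Sum>j\<in>N. A t i j * x t j) - 1 / Q) \<le> (\<Sum>i\<in>N. x (Suc t) i)"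
    by (rule sum_mono) (use floorQ_gt[OF Qge] in \<open>simp add: less_imp_le\<close>)
  moreover have "(\<Sum>i\<in>N. (\<Sum>j\<in>N. A t i j * x t j) - 1 / Q) = (\<Sum>i\<in>N. x t i) - real n / Q"
    using sum_mix by (simp add: sum_subtractf)
  ultimately show ?thesis by simp
qed

lemma one_step:
  assumes g: "gridQ Q c" and h: "\<forall>j\<in>N. c \<le> x t j"
  shows "(\<Sum>i\<in>N. (x (Suc t) i - c)^2) \<le> (\<Sum>i\<in>N. (x t i - c)^2)
     - (1/2) * (\<Sum>i\<in>N. \<Sum>j\<in>N. \<Sum>l\<in>N. A t i j * A t i l * (x t j - x t l)^2)"
proof -
  have r: "((\<Sum>j\<in>N. A t i j * x t j) - c)^2 = (\<Sum>j\<in>N. A t i j * (x t j - c)^2)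
      - (1/2) * (\<Sum>j\<in>N. \<Sum>l\<in>N. A t i j * A t i l * (x t j - x t l)^2)" if i: "i \<in> N" for i
  proof -
    have "(\<Sum>j\<in>N. A t i j * (x t j - c)) = (\<Sum>j\<in>N. A t i j * x t j) - c"
      using rowsum[OF i] by (simp add: right_diff_distrib sum_subtractf sum_distrib_right[symmetric])
    moreover have "(\<Sum>j\<in>N. A t i j * (x t j - c))^2 = (\<Sum>j\<in>N. A t i j * (x t j - c)^2)
      - (1/2) * (\<Sum>j\<in>N. \<Sum>l\<in>N. A t i j * A t i l * ((x t j - c) - (x t l - c))^2)"
      using row_id[of N "A t i" "\<lambda>j. x t j - c"] rowsum[OF i] by simp
    ultimately show ?thesis by simp
  qed
  have "(\<Sum>i\<in>N. (x (Suc t) i - c)^2) \<le> (\<Sum>i\<in>N. ((\<Sum>j\<in>N. A t i j * x t j) - c)^2)"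
  proof (rule sum_mono)
    fix i assume i: "i \<in> N"
    have c1: "c \<le> x (Suc t) i" using lower_step[OF g h i] .
    have c2: "x (Suc t) i \<le> (\<Sum>j\<in>N. A t i j * x t j)" by (simp add: floorQ_le[OF Qge])
    show "(x (Suc t) i - c)^2 \<le> ((\<Sum>j\<in>N. A t i j * x t j) - c)^2"
      using c1 c2 by (intro power_mono) auto
  qed
  also have "\<dots> = (\<Sum>i\<in>N. (\<Sum>j\<in>N. A t i j * (x t j - c)^2)
      - (1/2) * (\<Sum>j\<in>N. \<Sum>l\<in>N. A t i j * A t i l * (x t j - x t l)^2))"
    using r by (intro sum.cong) auto
  also have "\<dots> = (\<Sum>i\<in>N. (x t i - c)^2)
     - (1/2) * (\<Sum>i\<in>N. \<Sum>j\<in>N. \<Sum>l\<in>N. A t i j * A t i l * (x t j - x t l)^2)"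
    using sum_mix[of t "\<lambda>j. (x t j - c)^2"]
    by (simp add: sum_subtractf sum_divide_distrib[symmetric])
  finally show ?thesis .
qed

end



lemma pair_bound:
  fixes y g :: "nat \<Rightarrow> real" and P :: "nat set" and R :: "nat \<Rightarrow> bool" and \<sigma> :: "nat \<Rightarrow> nat"
  assumes P: "P \<subseteq> {1..<n}"
    and gdef: "\<forall>d\<in>{1..<n}. g d = y (\<sigma> d) - y (\<sigma> (Suc d))"
    and gnn: "\<forall>d\<in>{1..<n}. g d \<ge> 0"
    and hu: "\<forall>d\<in>P. R d \<longrightarrow> y (\<sigma> d) \<le> u"
    and hv: "\<forall>d\<in>P. R d \<longrightarrow> v \<le> y (\<sigma> (Suc d))"
  shows "(\<Sum>d\<in>{d\<in>P. R d}. (g d)^2) \<le> (u - v)^2"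
proof (cases "{d\<in>P. R d} = {}")
  case True
  have "(\<Sum>d\<in>{d\<in>P. R d}. (g d)^2) = 0" by (simp only: True sum.empty)
  thus ?thesis by simp
next
  case False
  define D where "D = {d\<in>P. R d}"
  have fD: "finite D" by (rule finite_subset[of _ "{1..<n}"]) (use P in \<open>auto simp: D_def\<close>)
  have ne: "D \<noteq> {}" using False D_def by simp
  define a where "a = Min D"
  define b where "b = Max D"
  have aD: "a \<in> D" and bD: "b \<in> D" using fD ne a_def b_def by auto
  have Dab: "D \<subseteq> {a..b}" using fD a_def b_def by auto
  have "a \<in> {1..<n}" "b \<in> {1..<n}" using aD bD P unfolding D_def by auto
  hence ab: "{a..b} \<subseteq> {1..<n}" by auto
  have gD: "\<And>d. d \<in> D \<Longrightarrow> g d \<ge> 0" using gnn P D_def by auto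
  have "(\<Sum>d\<in>D. (g d)^2) \<le> (\<Sum>d\<in>D. g d)^2" by (rule sumsq_le_sq[OF fD gD])
  also have "\<dots> \<le> (u - v)^2"
  proof (rule power_mono)
    show "0 \<le> (\<Sum>d\<in>D. g d)" using gD by (simp add: sum_nonneg)
    have "(\<Sum>d\<in>D. g d) \<le> (\<Sum>d\<in>{a..b}. g d)"
      using Dab ab gnn by (intro sum_mono2) auto
    also have "(\<Sum>d\<in>{a..b}. g d) = (\<Sum>d=a..b. (- y (\<sigma> (Suc d))) - (- y (\<sigma> d)))"
      using ab gdef by (intro sum.cong) auto
    also have "\<dots> = y (\<sigma> a) - y (\<sigma> (Suc b))"
      using sum_Suc_diff[of a b "\<lambda>d. - y (\<sigma> d)"] aD bD Dab by auto
    also have "\<dots> \<le> u - v" using hu hv aD bD unfolding D_def by fastforce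
    finally show "(\<Sum>d\<in>D. g d) \<le> u - v" .
  qed
  finally show ?thesis unfolding D_def .
qed

context qc begin

lemma row_cut:
  assumes ST: "S \<subseteq> N" "T \<subseteq> N" "S \<union> T = N" "S \<inter> T = {}"
    and cr: "\<exists>i\<in>S. \<exists>j\<in>T. (i, j) \<in> edges n (A t) \<or> (j, i) \<in> edges n (A t)"
  shows "\<eta> / 2 \<le> (\<Sum>i\<in>N. (\<Sum>j\<in>S. A t i j) * (\<Sum>l\<in>T. A t i l))"
proof -
  have fS: "finite S" and fT: "finite T" using ST finite_subset by blast+
  have key: "\<exists>i0\<in>N. \<eta> \<le> (\<Sum>j\<in>S. A t i0 j) \<and> \<eta> \<le> (\<Sum>l\<in>T. A t i0 l)"
  proof -
    obtain i j where i: "i \<in> S" and j: "j \<in> T" and e: "(i, j) \<in> edges n (A t) \<or> (j, i) \<in> edges n (A t)"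
      using cr by blast
    have iN: "i \<in> N" and jN: "j \<in> N" using i j ST by auto
    show ?thesis
    proof (cases "A t j i > 0")
      case True
      have "\<eta> \<le> A t j i" using lbnd[OF jN iN True] .
      also have "\<dots> \<le> (\<Sum>j'\<in>S. A t j j')" using i fS nonneg[OF jN] ST
        by (intro member_le_sum) auto
      finally have 1: "\<eta> \<le> (\<Sum>j'\<in>S. A t j j')" .
      have "\<eta> \<le> A t j j" using diagpos[OF jN] .
      also have "\<dots> \<le> (\<Sum>l\<in>T. A t j l)" using j fT nonneg[OF jN] ST
        by (intro member_le_sum) auto
      finally show ?thesis using 1 jN by blast
    next
      case False
      hence "A t i j > 0" using e unfolding edges_def by auto
      hence "\<eta> \<le> A t i j" using lbnd[OF iN jN] by blast
      also have "\<dots> \<le> (\<Sum>l\<in>T. A t i l)" using j fT nonneg[OF iN] ST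
        by (intro member_le_sum) auto
      finally have 1: "\<eta> \<le> (\<Sum>l\<in>T. A t i l)" .
      have "\<eta> \<le> A t i i" using diagpos[OF iN] .
      also have "\<dots> \<le> (\<Sum>j'\<in>S. A t i j')" using i fS nonneg[OF iN] ST
        by (intro member_le_sum) auto
      finally show ?thesis using 1 iN by blast
    qed
  qed
  then obtain i0 where i0: "i0 \<in> N" and r: "\<eta> \<le> (\<Sum>j\<in>S. A t i0 j)" and s: "\<eta> \<le> (\<Sum>l\<in>T. A t i0 l)" by blast
  have rs: "(\<Sum>j\<in>S. A t i0 j) + (\<Sum>l\<in>T. A t i0 l) = 1"
    using rowsum[OF i0] sum.union_disjoint[OF fS fT ST(4), of "A t i0"] ST(3) by simp
  have nn: "\<And>i. i \<in> N \<Longrightarrow> 0 \<le> (\<Sum>j\<in>S. A t i j) * (\<Sum>l\<in>T. A t i l)"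
    using nonneg ST by (intro mult_nonneg_nonneg sum_nonneg) auto
  have "\<eta> / 2 \<le> (\<Sum>j\<in>S. A t i0 j) * (\<Sum>l\<in>T. A t i0 l)"
  proof (cases "(\<Sum>j\<in>S. A t i0 j) \<ge> 1/2")
    case True
    hence "(1/2) * (\<Sum>l\<in>T. A t i0 l) \<le> (\<Sum>j\<in>S. A t i0 j) * (\<Sum>l\<in>T. A t i0 l)"
      using s eta by (intro mult_right_mono) auto
    thus ?thesis using s by linarith
  next
    case False
    hence "(\<Sum>j\<in>S. A t i0 j) * (1/2) \<le> (\<Sum>j\<in>S. A t i0 j) * (\<Sum>l\<in>T. A t i0 l)"
      using r eta rs by (intro mult_left_mono) auto
    thus ?thesis using r by linarith
  qed
  also have "\<dots> \<le> (\<Sum>i\<in>N. (\<Sum>j\<in>S. A t i j) * (\<Sum>l\<in>T. A t i l))"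
    using i0 nn by (intro member_le_sum) auto
  finally show ?thesis .
qed

lemma split_prod:
  fixes a :: "nat \<Rightarrow> real" and h :: real
  assumes "S \<subseteq> N" "T \<subseteq> N"
  shows "(\<Sum>j\<in>N. \<Sum>l\<in>N. if j \<in> S \<and> l \<in> T then a j * a l * h else 0)
       = h * ((\<Sum>j\<in>S. a j) * (\<Sum>l\<in>T. a l))"
proof -
  have "(\<Sum>j\<in>N. \<Sum>l\<in>N. if j \<in> S \<and> l \<in> T then a j * a l * h else 0)
      = (\<Sum>j\<in>N. if j \<in> S then (\<Sum>l\<in>N. if l \<in> T then a j * a l * h else 0) else 0)"
    by (intro sum.cong) auto
  also have "\<dots> = (\<Sum>j\<in>S. (\<Sum>l\<in>T. a j * a l * h))"
    using assms by (simp add: sum.inter_restrict[symmetric] Int_absorb1 Int_absorb2)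
  also have "\<dots> = (\<Sum>j\<in>S. \<Sum>l\<in>T. h * (a j * a l))"
    by (intro sum.cong refl) (rule mult.commute)
  also have "\<dots> = h * (\<Sum>j\<in>S. \<Sum>l\<in>T. a j * a l)"
    by (simp add: sum_distrib_left)
  also have "\<dots> = h * ((\<Sum>j\<in>S. a j) * (\<Sum>l\<in>T. a l))"
    by (simp add: sum_product)
  finally show ?thesis .
qed

lemma step_cut:
  fixes h :: "nat \<Rightarrow> real" and S T :: "nat \<Rightarrow> nat set"
  assumes fin: "finite P"
    and ST: "\<forall>d\<in>P. S d \<subseteq> N \<and> T d \<subseteq> N \<and> S d \<union> T d = N \<and> S d \<inter> T d = {}"
    and cr: "\<forall>d\<in>P. \<exists>i\<in>S d. \<exists>j\<in>T d. (i, j) \<in> edges n (A t) \<or> (j, i) \<in> edges n (A t)"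
    and pb: "\<forall>j\<in>N. \<forall>l\<in>N. (\<Sum>d\<in>{d\<in>P. j \<in> S d \<and> l \<in> T d}. h d) \<le> (x t j - x t l)^2"
    and hnn: "\<forall>d\<in>P. h d \<ge> 0"
  shows "(\<eta>/2) * (\<Sum>d\<in>P. h d) \<le> (\<Sum>i\<in>N. \<Sum>j\<in>N. \<Sum>l\<in>N. A t i j * A t i l * (x t j - x t l)^2)"
proof -
  have "(\<eta>/2) * (\<Sum>d\<in>P. h d) = (\<Sum>d\<in>P. h d * (\<eta>/2))" by (simp add: sum_distrib_left mult_ac)
  also have "\<dots> \<le> (\<Sum>d\<in>P. h d * (\<Sum>i\<in>N. (\<Sum>j\<in>S d. A t i j) * (\<Sum>l\<in>T d. A t i l)))"
    using row_cut ST cr hnn by (intro sum_mono mult_left_mono) auto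
  also have "\<dots> = (\<Sum>d\<in>P. \<Sum>i\<in>N. \<Sum>j\<in>N. \<Sum>l\<in>N. if j \<in> S d \<and> l \<in> T d then A t i j * A t i l * h d else 0)"
  proof (rule sum.cong[OF refl])
    fix d assume d: "d \<in> P"
    have "h d * (\<Sum>i\<in>N. (\<Sum>j\<in>S d. A t i j) * (\<Sum>l\<in>T d. A t i l))
       = (\<Sum>i\<in>N. h d * ((\<Sum>j\<in>S d. A t i j) * (\<Sum>l\<in>T d. A t i l)))"
      by (simp add: sum_distrib_left)
    also have "\<dots> = (\<Sum>i\<in>N. \<Sum>j\<in>N. \<Sum>l\<in>N. if j \<in> S d \<and> l \<in> T d then A t i j * A t i l * h d else 0)"
      using split_prod[of "S d" "T d" _ "h d"] ST d by simp
    finally show "h d * (\<Sum>i\<in>N. (\<Sum>j\<in>S d. A t i j) * (\<Sum>l\<in>T d. A t i l))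
       = (\<Sum>i\<in>N. \<Sum>j\<in>N. \<Sum>l\<in>N. if j \<in> S d \<and> l \<in> T d then A t i j * A t i l * h d else 0)" .
  qed
  also have "\<dots> = (\<Sum>i\<in>N. \<Sum>d\<in>P. \<Sum>j\<in>N. \<Sum>l\<in>N. if j \<in> S d \<and> l \<in> T d then A t i j * A t i l * h d else 0)"
    by (rule sum.swap)
  also have "\<dots> = (\<Sum>i\<in>N. \<Sum>j\<in>N. \<Sum>d\<in>P. \<Sum>l\<in>N. if j \<in> S d \<and> l \<in> T d then A t i j * A t i l * h d else 0)"
    by (intro sum.cong refl sum.swap)
  also have "\<dots> = (\<Sum>i\<in>N. \<Sum>j\<in>N. \<Sum>l\<in>N. \<Sum>d\<in>P. if j \<in> S d \<and> l \<in> T d then A t i j * A t i l * h d else 0)"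
    by (intro sum.cong refl sum.swap)
  also have "\<dots> = (\<Sum>i\<in>N. \<Sum>j\<in>N. \<Sum>l\<in>N. A t i j * A t i l * (\<Sum>d\<in>{d\<in>P. j \<in> S d \<and> l \<in> T d}. h d))"
  proof (intro sum.cong refl)
    fix i j l
    have "A t i j * A t i l * (\<Sum>d\<in>{d\<in>P. j \<in> S d \<and> l \<in> T d}. h d)
        = A t i j * A t i l * (\<Sum>d\<in>P. if j \<in> S d \<and> l \<in> T d then h d else 0)"
      by (simp only: sum.inter_filter[OF fin])
    also have "\<dots> = (\<Sum>d\<in>P. A t i j * A t i l * (if j \<in> S d \<and> l \<in> T d then h d else 0))"
      by (rule sum_distrib_left)
    also have "\<dots> = (\<Sum>d\<in>P. if j \<in> S d \<and> l \<in> T d then A t i j * A t i l * h d else 0)"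
      by (intro sum.cong refl) simp
    finally show "(\<Sum>d\<in>P. if j \<in> S d \<and> l \<in> T d then A t i j * A t i l * h d else 0)
       = A t i j * A t i l * (\<Sum>d\<in>{d\<in>P. j \<in> S d \<and> l \<in> T d}. h d)" by simp
  qed
  also have "\<dots> \<le> (\<Sum>i\<in>N. \<Sum>j\<in>N. \<Sum>l\<in>N. A t i j * A t i l * (x t j - x t l)^2)"
    using pb nonneg by (intro sum_mono mult_left_mono) auto
  finally show ?thesis .
qed

end



context qc begin

lemma window:
  assumes n2: "n \<ge> 2"
  shows "(\<Sum>i\<in>N. (x (k*B+B) i - Min (x (k*B) ` N))^2)
     \<le> (1 - \<eta> / (4 * (real n)^2)) * (\<Sum>i\<in>N. (x (k*B) i - Min (x (k*B) ` N))^2)"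
proof -
  define t0 where "t0 = k*B"
  define y where "y = x t0"
  obtain \<sigma> where \<sigma>: "\<sigma> permutes N" and so: "\<forall>p\<in>{1..<n}. y (\<sigma> (Suc p)) \<le> y (\<sigma> p)"
    using sort_perm by blast
  have sorted: "y (\<sigma> q) \<le> y (\<sigma> p)" if "1 \<le> p" "p \<le> q" "q \<le> n" for p q
    using that(2,3)
  proof (induction q rule: dec_induct)
    case base thus ?case by simp
  next
    case (step q)
    hence "y (\<sigma> (Suc q)) \<le> y (\<sigma> q)" using so that(1) by auto
    thus ?case using step by auto
  qed
  have \<sigma>N: "\<And>p. \<sigma> p \<in> N \<longleftrightarrow> p \<in> N" using permutes_in_image[OF \<sigma>] by blast
  have \<sigma>im: "\<sigma> ` N = N" using permutes_image[OF \<sigma>] .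
  have \<sigma>inj: "inj \<sigma>" using permutes_inj[OF \<sigma>] .
  define c where "c = y (\<sigma> n)"
  have cmin: "\<forall>i\<in>N. c \<le> y i"
  proof
    fix i assume "i \<in> N"
    then obtain p where p: "p \<in> N" "\<sigma> p = i" using \<sigma>im by (metis imageE)
    thus "c \<le> y i" unfolding c_def using sorted[of p n] by auto
  qed
  have cmax: "\<forall>i\<in>N. y i \<le> y (\<sigma> 1)"
  proof
    fix i assume "i \<in> N"
    then obtain p where p: "p \<in> N" "\<sigma> p = i" using \<sigma>im by (metis imageE)
    thus "y i \<le> y (\<sigma> 1)" using sorted[of 1 p] by auto
  qed
  have Minc: "Min (y ` N) = c"
    using cmin n2 \<sigma>N by (intro Min_eqI) (auto simp: c_def)
  have cg: "gridQ Q c" unfolding c_def y_def using grid_x \<sigma>N n2 by auto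
  have low: "\<forall>i\<in>N. c \<le> x s i" if "t0 \<le> s" for s
    using lower_mono[OF cg _ that] cmin unfolding y_def by blast
  define g where "g d = y (\<sigma> d) - y (\<sigma> (Suc d))" for d
  have gnn: "\<forall>d\<in>{1..<n}. g d \<ge> 0" unfolding g_def using so by auto
  define S where "S d = \<sigma> ` {1..d}" for d
  define T where "T d = \<sigma> ` {Suc d..n}" for d
  have ST: "\<forall>d\<in>{1..<n}. S d \<subseteq> N \<and> T d \<subseteq> N \<and> S d \<union> T d = N \<and> S d \<inter> T d = {}"
  proof
    fix d assume d: "d \<in> {1..<n}"
    have "S d \<union> T d = \<sigma> ` ({1..d} \<union> {Suc d..n})" unfolding S_def T_def by auto
    also have "{1..d} \<union> {Suc d..n} = N" using d by auto
    finally have u: "S d \<union> T d = N" using \<sigma>im by simp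
    have "S d \<inter> T d = \<sigma> ` ({1..d} \<inter> {Suc d..n})" unfolding S_def T_def
      using image_Int[OF \<sigma>inj, of "{1..d}" "{Suc d..n}"] by argo
    also have "{1..d} \<inter> {Suc d..n} = {}" by auto
    finally show "S d \<subseteq> N \<and> T d \<subseteq> N \<and> S d \<union> T d = N \<and> S d \<inter> T d = {}" using u by auto
  qed
  define cross where "cross d t \<longleftrightarrow> (\<exists>i\<in>S d. \<exists>j\<in>T d. (i, j) \<in> edges n (A t) \<or> (j, i) \<in> edges n (A t))" for d t
  define G where "G = {d\<in>{1..<n}. g d > 0}"
  have ex: "\<exists>t. t \<in> {t0..<t0+B} \<and> cross d t" if d: "d \<in> G" for d
  proof -
    have "\<forall>p\<in>{1..<n}. x (k*B) (\<sigma> p) \<ge> x (k*B) (\<sigma> (Suc p))" using so unfolding y_def t0_def by blast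
    hence "x (k*B) (\<sigma> d) = x (k*B) (\<sigma> (Suc d)) \<or>
          (\<exists>t\<in>{k*B..<(Suc k)*B}. \<exists>i\<in>\<sigma> ` {1..d}. \<exists>j\<in>\<sigma> ` {Suc d..n}.
              (i, j) \<in> edges n (A t) \<or> (j, i) \<in> edges n (A t))"
      using conn \<sigma> d unfolding G_def by blast
    moreover have "x (k*B) (\<sigma> d) \<noteq> x (k*B) (\<sigma> (Suc d))" using d unfolding G_def g_def y_def t0_def by auto
    ultimately have "\<exists>t\<in>{k*B..<(Suc k)*B}. \<exists>i\<in>\<sigma> ` {1..d}. \<exists>j\<in>\<sigma> ` {Suc d..n}.
              (i, j) \<in> edges n (A t) \<or> (j, i) \<in> edges n (A t)" by blast
    moreover have "{k*B..<(Suc k)*B} = {t0..<t0+B}" by (simp add: t0_def add.commute)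
    ultimately show ?thesis unfolding cross_def S_def T_def by blast
  qed
  define td where "td d = (LEAST t. t \<in> {t0..<t0+B} \<and> cross d t)" for d
  have td: "td d \<in> {t0..<t0+B} \<and> cross d (td d)" if "d \<in> G" for d
    using LeastI_ex[OF ex[OF that]] unfolding td_def .
  have tdmin: "\<not> cross d s" if "d \<in> G" "t0 \<le> s" "s < td d" for d s
  proof
    assume "cross d s"
    moreover have "s \<in> {t0..<t0+B}" using td[OF that(1)] that by auto
    ultimately have "td d \<le> s" unfolding td_def by (intro Least_le) auto
    thus False using that by simp
  qed
  have inv: "(\<forall>i\<in>S d. y (\<sigma> d) \<le> x s i) \<and> (\<forall>j\<in>T d. x s j \<le> y (\<sigma> (Suc d)))"
    if d: "d \<in> G" and s: "t0 \<le> s" "s \<le> td d" for d s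
    using s
  proof (induction s rule: dec_induct)
    case base
    have dn: "d \<in> {1..<n}" using d G_def by auto
    show ?case
    proof
      show "\<forall>i\<in>S d. y (\<sigma> d) \<le> x t0 i" unfolding S_def y_def[symmetric] using sorted dn by auto
      show "\<forall>j\<in>T d. x t0 j \<le> y (\<sigma> (Suc d))" unfolding T_def y_def[symmetric] using sorted dn by auto
    qed
  next
    case (step s)
    have dn: "d \<in> {1..<n}" using d G_def by auto
    have STd: "S d \<subseteq> N" "T d \<subseteq> N" "S d \<union> T d = N" "S d \<inter> T d = {}" using ST dn by auto
    have nc: "\<not> cross d s" using tdmin[OF d] step by auto
    have z1: "A s i j = 0" if "i \<in> S d" "j \<in> T d" for i j
    proof -
      have "(j, i) \<notin> edges n (A s)" using nc that unfolding cross_def by blast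
      thus ?thesis using that STd nonneg[of i j s] unfolding edges_def by fastforce
    qed
    have z2: "A s j i = 0" if "i \<in> S d" "j \<in> T d" for i j
    proof -
      have "(i, j) \<notin> edges n (A s)" using nc that unfolding cross_def by blast
      thus ?thesis using that STd nonneg[of j i s] unfolding edges_def by fastforce
    qed
    have IH: "(\<forall>i\<in>S d. y (\<sigma> d) \<le> x s i) \<and> (\<forall>j\<in>T d. x s j \<le> y (\<sigma> (Suc d)))"
      using step by auto
    have g1: "gridQ Q (y (\<sigma> d))" unfolding y_def using grid_x \<sigma>N dn by auto
    show ?case
    proof
      show "\<forall>i\<in>S d. y (\<sigma> d) \<le> x (Suc s) i"
      proof
        fix i assume i: "i \<in> S d"
        have iN: "i \<in> N" using i STd by auto
        have "y (\<sigma> d) \<le> (\<Sum>j\<in>N. A s i j * x s j)"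
        proof (rule conv_ge[OF iN])
          fix j assume j: "j \<in> N" "A s i j \<noteq> 0"
          hence "j \<in> S d" using z1[OF i] STd by auto
          thus "y (\<sigma> d) \<le> x s j" using IH by auto
        qed
        thus "y (\<sigma> d) \<le> x (Suc s) i" using floorQ_ge[OF Qge g1] by simp
      qed
      show "\<forall>j\<in>T d. x (Suc s) j \<le> y (\<sigma> (Suc d))"
      proof
        fix j assume j: "j \<in> T d"
        have jN: "j \<in> N" using j STd by auto
        have "(\<Sum>l\<in>N. A s j l * x s l) \<le> y (\<sigma> (Suc d))"
        proof (rule conv_le[OF jN])
          fix l assume l: "l \<in> N" "A s j l \<noteq> 0"
          hence "l \<in> T d" using z2[OF _ j, of l] STd by blast
          thus "x s l \<le> y (\<sigma> (Suc d))" using IH by auto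
        qed
        thus "x (Suc s) j \<le> y (\<sigma> (Suc d))" using floorQ_le[OF Qge, of "(\<Sum>l\<in>N. A s j l * x s l)"] by simp
      qed
    qed
  qed
  define V where "V s = (\<Sum>i\<in>N. (x s i - c)^2)" for s
  define P where "P t = {d\<in>G. td d = t}" for t
  have fG: "finite G" unfolding G_def by simp
  have dec: "(\<eta>/4) * (\<Sum>d\<in>P t. (g d)^2) \<le> V t - V (Suc t)" if t: "t \<in> {t0..<t0+B}" for t
  proof -
    have PG: "P t \<subseteq> G" unfolding P_def by auto
    have sc: "(\<eta>/2) * (\<Sum>d\<in>P t. (g d)^2) \<le> (\<Sum>i\<in>N. \<Sum>j\<in>N. \<Sum>l\<in>N. A t i j * A t i l * (x t j - x t l)^2)"
    proof (rule step_cut)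
      show "finite (P t)" using PG fG finite_subset by blast
      show "\<forall>d\<in>P t. S d \<subseteq> N \<and> T d \<subseteq> N \<and> S d \<union> T d = N \<and> S d \<inter> T d = {}"
        using ST PG unfolding G_def by blast
      show "\<forall>d\<in>P t. \<exists>i\<in>S d. \<exists>j\<in>T d. (i, j) \<in> edges n (A t) \<or> (j, i) \<in> edges n (A t)"
        using td unfolding P_def cross_def by auto
      show "\<forall>d\<in>P t. (g d)^2 \<ge> 0" by simp
      show "\<forall>j\<in>N. \<forall>l\<in>N. (\<Sum>d\<in>{d\<in>P t. j \<in> S d \<and> l \<in> T d}. (g d)^2) \<le> (x t j - x t l)^2"
      proof (intro ballI)
        fix j l assume "j \<in> N" "l \<in> N"
        show "(\<Sum>d\<in>{d\<in>P t. j \<in> S d \<and> l \<in> T d}. (g d)^2) \<le> (x t j - x t l)^2"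
        proof (rule pair_bound[where \<sigma>=\<sigma> and y=y])
          show "P t \<subseteq> {1..<n}" using PG G_def by auto
          show "\<forall>d\<in>{1..<n}. g d = y (\<sigma> d) - y (\<sigma> (Suc d))" by (simp add: g_def)
          show "\<forall>d\<in>{1..<n}. g d \<ge> 0" using gnn .
          show "\<forall>d\<in>P t. j \<in> S d \<and> l \<in> T d \<longrightarrow> y (\<sigma> d) \<le> x t j"
            using inv td unfolding P_def by fastforce
          show "\<forall>d\<in>P t. j \<in> S d \<and> l \<in> T d \<longrightarrow> x t l \<le> y (\<sigma> (Suc d))"
            using inv td unfolding P_def by fastforce
        qed
      qed
    qed
    have os: "V (Suc t) \<le> V t - (1/2) * (\<Sum>i\<in>N. \<Sum>j\<in>N. \<Sum>l\<in>N. A t i j * A t i l * (x t j - x t l)^2)"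
      unfolding V_def using one_step[OF cg] low t by auto
    show ?thesis using sc os by simp
  qed
  have tele: "V t0 - V (t0+B) = (\<Sum>t\<in>{t0..<t0+B}. V t - V (Suc t))"
    using sum_Suc_diff'[of t0 "t0+B" "\<lambda>t. - V t"] by simp
  have regroup: "(\<Sum>t\<in>{t0..<t0+B}. \<Sum>d\<in>P t. (g d)^2) = (\<Sum>d\<in>G. (g d)^2)"
  proof -
    have "(\<Sum>t\<in>{t0..<t0+B}. \<Sum>d\<in>P t. (g d)^2) = (\<Sum>t\<in>{t0..<t0+B}. \<Sum>d\<in>G. if td d = t then (g d)^2 else 0)"
      unfolding P_def by (rule sum.cong[OF refl]) (simp only: sum.inter_filter[OF fG])
    also have "\<dots> = (\<Sum>d\<in>G. \<Sum>t\<in>{t0..<t0+B}. if td d = t then (g d)^2 else 0)"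
      by (rule sum.swap)
    also have "\<dots> = (\<Sum>d\<in>G. (g d)^2)"
      using td by (intro sum.cong refl) auto
    finally show ?thesis .
  qed
  have Gall: "(\<Sum>d\<in>G. (g d)^2) = (\<Sum>d\<in>{1..<n}. (g d)^2)"
    using gnn by (intro sum.mono_neutral_left) (auto simp: G_def)
  have big: "(\<eta>/4) * (\<Sum>d\<in>{1..<n}. (g d)^2) \<le> V t0 - V (t0+B)"
  proof -
    have "(\<eta>/4) * (\<Sum>d\<in>{1..<n}. (g d)^2) = (\<Sum>t\<in>{t0..<t0+B}. (\<eta>/4) * (\<Sum>d\<in>P t. (g d)^2))"
      using regroup Gall by (simp only: sum_distrib_left[symmetric])
    also have "\<dots> \<le> (\<Sum>t\<in>{t0..<t0+B}. V t - V (Suc t))" using dec by (intro sum_mono) auto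
    finally show ?thesis using tele by simp
  qed
  have Vb: "V t0 \<le> (real n)^2 * (\<Sum>d\<in>{1..<n}. (g d)^2)"
  proof -
    have "V t0 \<le> (\<Sum>i\<in>N. (y (\<sigma> 1) - c)^2)" unfolding V_def y_def[symmetric]
      using cmin cmax by (intro sum_mono power_mono) auto
    also have "\<dots> = real n * (y (\<sigma> 1) - c)^2" by simp
    also have "y (\<sigma> 1) - c = (\<Sum>d\<in>{1..<n}. g d)"
    proof -
      have "(\<Sum>d\<in>{1..<n}. g d) = (\<Sum>d=1..<n. (- y (\<sigma> (Suc d))) - (- y (\<sigma> d)))"
        unfolding g_def by simp
      also have "\<dots> = y (\<sigma> 1) - y (\<sigma> n)" using sum_Suc_diff'[of 1 n "\<lambda>d. - y (\<sigma> d)"] n2 by simp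
      finally show ?thesis unfolding c_def by simp
    qed
    also have "real n * (\<Sum>d\<in>{1..<n}. g d)^2 \<le> real n * (real (card {1..<n}) * (\<Sum>d\<in>{1..<n}. (g d)^2))"
      using cauchy_schwarz_sum[of "{1..<n}" g] by (intro mult_left_mono) auto
    also have "\<dots> \<le> real n * (real n * (\<Sum>d\<in>{1..<n}. (g d)^2))"
      by (intro mult_left_mono mult_right_mono) (auto simp: sum_nonneg)
    finally show ?thesis by (simp add: power2_eq_square)
  qed
  have npos: "(real n)^2 > 0" using n2 by simp
  have "V t0 / (real n)^2 \<le> (\<Sum>d\<in>{1..<n}. (g d)^2)" using Vb npos by (simp add: divide_le_eq mult.commute)
  hence "(\<eta>/4) * (V t0 / (real n)^2) \<le> (\<eta>/4) * (\<Sum>d\<in>{1..<n}. (g d)^2)" using eta by (intro mult_left_mono) auto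
  hence "V (t0+B) \<le> V t0 - (\<eta>/4) * (V t0 / (real n)^2)" using big by linarith
  also have "\<dots> = (1 - \<eta> / (4 * (real n)^2)) * V t0" by (simp add: field_simps)
  finally show ?thesis unfolding V_def c_def[symmetric] using Minc unfolding y_def t0_def by simp
qed

end



lemma ln2_half: "1/2 \<le> ln (2::real)"
proof -
  have "exp (1/2::real) ^ 2 = exp 1" using exp_of_nat_mult[of 2 "1/2::real"] by simp
  hence "exp (1/2::real) ^ 2 \<le> 2 ^ 2" using exp_le by simp
  hence "exp (1/2::real) \<le> 2" by (rule power2_le_imp_le) simp
  thus ?thesis by (subst ln_ge_iff) auto
qed

context qc begin

definition W :: "nat \<Rightarrow> real" where
  "W k = (\<Sum>i\<in>N. (x (k*B) i - Min (x (k*B) ` N))^2)"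

lemma Min_props:
  assumes "n \<ge> 1"
  shows "Min (x t ` N) \<in> x t ` N" "\<forall>i\<in>N. Min (x t ` N) \<le> x t i" "gridQ Q (Min (x t ` N))"
proof -
  have ne: "x t ` N \<noteq> {}" using assms by auto
  show m: "Min (x t ` N) \<in> x t ` N" using Min_in[OF _ ne] by simp
  show "\<forall>i\<in>N. Min (x t ` N) \<le> x t i" by simp
  show "gridQ Q (Min (x t ` N))" using m grid_x by auto
qed

lemma W_step:
  assumes n2: "n \<ge> 2"
  shows "W (Suc k) \<le> (1 - \<eta> / (4 * (real n)^2)) * W k"
proof -
  define m where "m = Min (x (k*B) ` N)"
  define m' where "m' = Min (x (k*B+B) ` N)"
  have mp: "\<forall>i\<in>N. m \<le> x (k*B) i" "gridQ Q m" using Min_props n2 unfolding m_def by auto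
  have low: "\<forall>i\<in>N. m \<le> x (k*B+B) i" using lower_mono[OF mp(2) mp(1)] by simp
  have m'in: "m' \<in> x (k*B+B) ` N" using Min_props(1) n2 unfolding m'_def by auto
  have mm': "m \<le> m'" using m'in low by auto
  have m'le: "\<forall>i\<in>N. m' \<le> x (k*B+B) i" using Min_props(2) n2 unfolding m'_def by auto
  have "W (Suc k) = (\<Sum>i\<in>N. (x (k*B+B) i - m')^2)" unfolding W_def m'_def by (simp add: add.commute)
  also have "\<dots> \<le> (\<Sum>i\<in>N. (x (k*B+B) i - m)^2)"
    using m'le mm' by (intro sum_mono power_mono) auto
  also have "\<dots> \<le> (1 - \<eta> / (4 * (real n)^2)) * W k"
    using window[OF n2, of k] unfolding W_def m_def .
  finally show ?thesis .
qed

lemma W_pow: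
  assumes n2: "n \<ge> 2" and a1: "\<eta> / (4 * (real n)^2) \<le> 1"
  shows "W k \<le> (1 - \<eta> / (4 * (real n)^2))^k * W 0"
proof (induction k)
  case 0 thus ?case by simp
next
  case (Suc k)
  have "W (Suc k) \<le> (1 - \<eta> / (4 * (real n)^2)) * W k" by (rule W_step[OF n2])
  also have "\<dots> \<le> (1 - \<eta> / (4 * (real n)^2)) * ((1 - \<eta> / (4 * (real n)^2))^k * W 0)"
    using Suc a1 by (intro mult_left_mono) auto
  finally show ?case by simp
qed

lemma W_cons:
  assumes n2: "n \<ge> 2" and small: "W k < 1 / (real Q)^2"
  shows "\<forall>i\<in>N. x (k*B) i = Min (x (k*B) ` N)"
proof
  fix i assume i: "i \<in> N"
  define m where "m = Min (x (k*B) ` N)"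
  have mp: "\<forall>i\<in>N. m \<le> x (k*B) i" "gridQ Q m" using Min_props n2 unfolding m_def by auto
  show "x (k*B) i = m"
  proof (rule ccontr)
    assume "x (k*B) i \<noteq> m"
    hence lt: "m < x (k*B) i" using mp i by force
    have "1 / real Q \<le> x (k*B) i - m" using grid_diff[OF Qge grid_x[OF i] mp(2) lt] .
    hence "(1 / real Q)^2 \<le> (x (k*B) i - m)^2" by (intro power_mono) auto
    also have "\<dots> \<le> W k" unfolding W_def m_def[symmetric] using i by (intro member_le_sum) auto
    finally show False using small by (simp add: power_divide)
  qed
qed

lemma sum_lower: "(\<Sum>i\<in>N. x 0 i) - real n * real t / Q \<le> (\<Sum>i\<in>N. x t i)"
proof (induction t)
  case 0 thus ?case by simp
next
  case (Suc t)
  have "(\<Sum>i\<in>N. x 0 i) - real n * real (Suc t) / Q = ((\<Sum>i\<in>N. x 0 i) - real n * real t / Q) - real n / Q"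
    by (simp add: add_divide_distrib diff_divide_distrib algebra_simps)
  also have "\<dots> \<le> (\<Sum>i\<in>N. x t i) - real n / Q" using Suc by simp
  also have "\<dots> \<le> (\<Sum>i\<in>N. x (Suc t) i)" by (rule sum_step_ge)
  finally show ?case .
qed

lemma sum_upper: "(\<Sum>i\<in>N. x t i) \<le> (\<Sum>i\<in>N. x 0 i)"
proof (induction t)
  case 0 thus ?case by simp
next
  case (Suc t) thus ?case using sum_step_le[of t] by simp
qed

end



context qc begin

theorem main:
  assumes ne: "\<exists>i\<in>N. \<exists>j\<in>N. x0 i \<noteq> x0 j"
  shows "\<exists>xf. (\<forall>i\<in>N. (\<lambda>k. x k i) \<longlonglongrightarrow> xf) \<and>
     \<bar>xf - (\<Sum>i=1..n. x0 i) / real n\<bar>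
       \<le> 9 / real Q * (real n ^ 2 / \<eta>) * real B *
          ln (real Q * real n * (Max (x0 ` N) - Min (x0 ` N)))"
proof -
  obtain i1 j1 where ij: "i1 \<in> N" "j1 \<in> N" "x0 i1 \<noteq> x0 j1" using ne by blast
  have n2: "n \<ge> 2" using ij by (cases "i1 = j1") auto
  have n1: "1 \<in> N" using n2 by auto
  have eta1: "\<eta> \<le> 1"
  proof -
    have "\<eta> \<le> A 0 1 1" using diagpos[OF n1] .
    also have "\<dots> \<le> (\<Sum>j\<in>N. A 0 1 j)" using n1 nonneg[OF n1] by (intro member_le_sum) auto
    finally show ?thesis using rowsum[OF n1] by simp
  qed
  have x00: "x 0 = x0" by simp
  define U where "U = Max (x0 ` N)"
  define L where "L = Min (x0 ` N)"
  have neN: "x0 ` N \<noteq> {}" using n2 by auto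
  have Uin: "U \<in> x0 ` N" unfolding U_def using Max_in[OF _ neN] by simp
  have Lin: "L \<in> x0 ` N" unfolding L_def using Min_in[OF _ neN] by simp
  have bnds: "\<forall>i\<in>N. L \<le> x0 i \<and> x0 i \<le> U" unfolding U_def L_def by simp
  have gU: "gridQ Q U" using Uin grid_x[of _ 0] by auto
  have gL: "gridQ Q L" using Lin grid_x[of _ 0] by auto
  have LU: "L < U"
  proof (rule ccontr)
    assume "\<not> L < U"
    moreover have "L \<le> x0 i1" "x0 i1 \<le> U" "L \<le> x0 j1" "x0 j1 \<le> U" using bnds ij(1,2) by auto
    ultimately have "x0 i1 = x0 j1" by linarith
    thus False using ij by simp
  qed
  define D where "D = real Q * (U - L)"
  have D1: "D \<ge> 1"
  proof -
    have "1 / real Q \<le> U - L" using grid_diff[OF Qge gU gL LU] .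
    thus ?thesis unfolding D_def using Qge by (simp add: divide_le_eq mult.commute)
  qed
  have Qpos: "real Q > 0" using Qge by simp
  have W0: "W 0 \<le> real n * (U - L)^2"
  proof -
    have "W 0 = (\<Sum>i\<in>N. (x0 i - L)^2)" unfolding W_def L_def by simp
    also have "\<dots> \<le> (\<Sum>i\<in>N. (U - L)^2)" using bnds by (intro sum_mono power_mono) auto
    finally show ?thesis by simp
  qed
  define a where "a = \<eta> / (4 * (real n)^2)"
  have n4: "(real n)^2 \<ge> 4"
  proof -
    have "(2::real)^2 \<le> (real n)^2" using n2 by (intro power_mono) auto
    thus ?thesis by simp
  qed
  have apos: "a > 0" unfolding a_def using eta n2 by simp
  have a1: "a \<le> 1" unfolding a_def using eta1 eta n4 by (simp add: divide_le_eq)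
  define R where "R = real n * D^2"
  have R1: "R \<ge> 1"
  proof -
    have "D^2 \<ge> 1" using D1 by (simp add: one_le_power)
    moreover have "real n \<ge> 1" using n2 by simp
    ultimately have "1 * 1 \<le> real n * D^2" by (intro mult_mono) auto
    thus ?thesis unfolding R_def by simp
  qed
  define K where "K = nat \<lceil>ln R / a\<rceil> + 1"
  have lnR0: "ln R \<ge> 0" using R1 by simp
  have Kgt: "ln R / a < real K"
  proof -
    have "ln R / a \<le> real (nat \<lceil>ln R / a\<rceil>)" by linarith
    thus ?thesis unfolding K_def by simp
  qed
  have Kle: "real K \<le> ln R / a + 2"
  proof -
    have z0: "0 \<le> ln R / a" using lnR0 apos by simp
    have "real (nat \<lceil>ln R / a\<rceil>) = of_int \<lceil>ln R / a\<rceil>" using z0 by simp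
    moreover have "of_int \<lceil>ln R / a\<rceil> \<le> ln R / a + 1" by linarith
    ultimately have "real (nat \<lceil>ln R / a\<rceil>) \<le> ln R / a + 1" by simp
    thus ?thesis unfolding K_def by simp
  qed
  have aK: "ln R < a * real K" using Kgt apos by (simp add: divide_less_eq mult.commute)
  have pw: "(1 - a)^K < 1 / R"
  proof -
    have "(1 - a)^K \<le> exp (- a) ^ K"
      using a1 exp_ge_add_one_self[of "-a"] by (intro power_mono) auto
    also have "\<dots> = exp (real K * (- a))" by (rule exp_of_nat_mult[symmetric])
    also have "\<dots> < exp (- ln R)" using aK by (simp add: mult.commute)
    also have "\<dots> = 1 / R" using R1 by (simp add: exp_minus inverse_eq_divide)
    finally show ?thesis .
  qed
  have WK: "W K < 1 / (real Q)^2"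
  proof -
    have Rdef2: "real n * (U - L)^2 = R / (real Q)^2" unfolding R_def D_def using Qpos
      by (simp add: power_mult_distrib)
    have "W K \<le> (1 - a)^K * W 0" using W_pow[OF n2] a1 unfolding a_def by simp
    also have "\<dots> \<le> (1 - a)^K * (R / (real Q)^2)" using W0 Rdef2 a1 by (intro mult_left_mono) auto
    also have "\<dots> < (1 / R) * (R / (real Q)^2)" using pw R1 Qpos by (intro mult_strict_right_mono) auto
    also have "\<dots> = 1 / (real Q)^2" using R1 by simp
    finally show ?thesis .
  qed
  define T where "T = K * B"
  define v where "v = Min (x T ` N)"
  have cons: "\<forall>i\<in>N. x T i = v" using W_cons[OF n2 WK] unfolding T_def v_def .
  have gv: "gridQ Q v" using Min_props(3) n2 unfolding v_def by simp
  have pers: "\<forall>i\<in>N. x s i = v" if "T \<le> s" for s using cons_mono[OF gv cons that] .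
  have lim: "\<forall>i\<in>N. (\<lambda>k. x k i) \<longlonglongrightarrow> v"
  proof
    fix i assume i: "i \<in> N"
    have "eventually (\<lambda>k. x k i = v) sequentially"
      using pers i unfolding eventually_sequentially by blast
    thus "(\<lambda>k. x k i) \<longlonglongrightarrow> v" by (rule tendsto_eventually)
  qed
  define s0 where "s0 = (\<Sum>i=1..n. x0 i)"
  have sT: "(\<Sum>i\<in>N. x T i) = real n * v" using cons by simp
  have npos: "real n > 0" using n2 by simp
  have lo: "s0 - real n * real T / Q \<le> real n * v" using sum_lower[of T] sT unfolding s0_def by simp
  have hi: "real n * v \<le> s0" using sum_upper[of T] sT unfolding s0_def by simp
  have dev: "\<bar>v - s0 / real n\<bar> \<le> real T / Q"
  proof -
    have "s0 / real n - real T / Q \<le> v"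
    proof -
      have "(s0 - real n * real T / Q) / real n \<le> v" using lo npos by (simp add: divide_le_eq mult.commute)
      thus ?thesis using npos by (simp add: diff_divide_distrib)
    qed
    moreover have "v \<le> s0 / real n" using hi npos by (simp add: le_divide_eq mult.commute)
    ultimately show ?thesis by (simp add: abs_le_iff)
  qed
  have nD2: "real n * D \<ge> 2"
  proof -
    have "2 * 1 \<le> real n * D" using n2 D1 by (intro mult_mono) auto
    thus ?thesis by simp
  qed
  have lnnD: "ln (real n * D) \<ge> 1/2"
  proof -
    have "ln 2 \<le> ln (real n * D)" using nD2 by simp
    thus ?thesis using ln2_half by simp
  qed
  have lnR: "ln R \<le> 2 * ln (real n * D)"
  proof -
    have D0: "D > 0" using D1 by simp
    have "ln R = ln (real n) + 2 * ln D" unfolding R_def using npos D0 by (simp add: ln_mult ln_realpow)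
    also have "\<dots> \<le> 2 * ln (real n) + 2 * ln D" using n2 by simp
    also have "\<dots> = 2 * ln (real n * D)" using npos D0 by (simp add: ln_mult)
    finally show ?thesis .
  qed
  define M where "M = real n ^ 2 / \<eta>"
  have M4: "M \<ge> 4"
  proof -
    have "(real n)^2 * \<eta> \<le> (real n)^2" using eta1 by (intro mult_left_le) auto
    hence "(real n)^2 \<le> M" unfolding M_def using eta by (simp add: le_divide_eq)
    thus ?thesis using n4 by simp
  qed
  have Kb: "real K \<le> 9 * M * ln (real n * D)"
  proof -
    have "ln R / a = 4 * M * ln R" unfolding a_def M_def using eta n2 by (simp add: field_simps)
    also have "\<dots> \<le> 4 * M * (2 * ln (real n * D))" using lnR M4 by (intro mult_left_mono) auto
    finally have "real K \<le> 8 * M * ln (real n * D) + 2" using Kle by simp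
    moreover have "2 \<le> M * ln (real n * D)"
    proof -
      have "4 * (1/2) \<le> M * ln (real n * D)" using M4 lnnD by (intro mult_mono) auto
      thus ?thesis by simp
    qed
    ultimately show ?thesis by simp
  qed
  have arg: "real Q * real n * (Max (x0 ` N) - Min (x0 ` N)) = real n * D"
    unfolding D_def U_def L_def by simp
  have "\<bar>v - s0 / real n\<bar> \<le> real K * real B / Q" using dev unfolding T_def by simp
  also have "\<dots> \<le> 9 * M * ln (real n * D) * real B / Q"
    using Kb Qpos by (intro divide_right_mono mult_right_mono) auto
  also have "\<dots> = 9 / real Q * (real n ^ 2 / \<eta>) * real B * ln (real Q * real n * (Max (x0 ` N) - Min (x0 ` N)))"
    unfolding arg M_def by (simp add: mult_ac)
  finally show ?thesis using lim unfolding s0_def by blast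
qed

end


theorem proposition7:
  "\<exists>c::real. \<forall>(n::nat) (\<eta>::real) (B::nat) (Q::nat)
       (A::nat \<Rightarrow> nat \<Rightarrow> nat \<Rightarrow> real) (x0::nat \<Rightarrow> real).
     \<eta> > 0 \<and> B \<ge> 1 \<and> Q \<ge> 1 \<and>
     (\<forall>i\<in>{1..n}. \<exists>m::int. x0 i = real_of_int m / real Q) \<and>
     (\<exists>i\<in>{1..n}. \<exists>j\<in>{1..n}. x0 i \<noteq> x0 j) \<and>
     (\<forall>k. doubly_stochastic n (A k) \<and> (\<forall>i\<in>{1..n}. A k i i > 0) \<and>
          (\<forall>i\<in>{1..n}. \<forall>j\<in>{1..n}. A k i j > 0 \<longrightarrow> A k i j \<ge> \<eta>)) \<and>
     (\<forall>k \<sigma> d. \<sigma> permutes {1..n} \<and>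
          (\<forall>p\<in>{1..<n}. traj n Q A x0 (k*B) (\<sigma> p) \<ge> traj n Q A x0 (k*B) (\<sigma> (Suc p))) \<and>
          d \<in> {1..<n} \<longrightarrow>
          traj n Q A x0 (k*B) (\<sigma> d) = traj n Q A x0 (k*B) (\<sigma> (Suc d)) \<or>
          (\<exists>t\<in>{k*B..<(Suc k)*B}. \<exists>i\<in>\<sigma> ` {1..d}. \<exists>j\<in>\<sigma> ` {Suc d..n}.
              (i, j) \<in> edges n (A t) \<or> (j, i) \<in> edges n (A t)))
     \<longrightarrow>
     (\<exists>xf::real.
        (\<forall>i\<in>{1..n}. (\<lambda>k. traj n Q A x0 k i) \<longlonglongrightarrow> xf) \<and>
        \<bar>xf - (\<Sum>i=1..n. x0 i) / real n\<bar>
          \<le> c / real Q * (real n ^ 2 / \<eta>) * real B *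
             ln (real Q * real n * (Max (x0 ` {1..n}) - Min (x0 ` {1..n}))))"
  apply (rule exI[of _ "9::real"])
  apply (intro allI impI)
  apply (elim conjE)
  subgoal premises p for n \<eta> B Q A x0
    using qc.main[OF qc.intro[OF p(1) p(2) p(3) p(4) p(6) p(7)] p(5)] by simp
  done

end
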